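(* Let $\mathcal{Z}=\{(\mathbf{x}_i,y_i)\}_{i=1}^n$ be drawn i.i.d. from $\rho$, where $|y|\le M$ $\rho$-almost surely. For every $r>0$ and $\epsilon>0$, $$\mathrm{Prob}\{|S(\mathcal{Z},r)-\mathbb{E}S(\mathcal{Z},r)|\ge\epsilon\}\le 2\exp\Big(-\frac{n\epsilon^2}{32(M+\kappa Dr)^4}\Big).$$
   Context: Setting: $X\subset\mathbb{R}^p$ compact, $\rho$ a probability measure on $Z=X\times\mathbb{R}$ with marginal $\rho_X$; $\mathcal{K}$ a Mercer kernel on $X$ with RKHS $\mathbb{H}_{\mathcal{K}}$; $\mathbb{H}^p_{\mathcal{K}}$ the space of $\vec f=(f^1,\dots,f^p)$ with $f^j\in\mathbb{H}_{\mathcal{K}}$; $\mathcal{F}_r=\{\vec f\in\mathbb{H}^p_{\mathcal{K}}:\sum_i\|f^i\|_{\mathcal{K}}\le r\}$. Fix $s>0$ and $\omega^s(\mathbf{x})=\exp(-\|\mathbf{x}\|^2/(2s^2))$. $\mathcal{E}_{\mathcal{Z}}(\vec f)=\frac1{n^2}\sum_{i,j=1}^n\omega^s(\mathbf{x}_j-\mathbf{x}_i)(y_i-y_j+\vec f(\mathbf{x}_i)\cdot(\mathbf{x}_j-\mathbf{x}_i))^2$ and $\mathcal{E}(\vec f)=\int_Z\int_Z\omega^s(\mathbf{x}-\mathbf{u})(y-v+\vec f(\mathbf{x})\cdot(\mathbf{u}-\mathbf{x}))^2d\rho(\mathbf{x},y)d\rho(\mathbf{u},v)$. $S(\mathcal{Z},r)=\sup_{\vec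 f\in\mathcal{F}_r}|\mathcal{E}_{\mathcal{Z}}(\vec f)-\mathcal{E}(\vec f)|$. $\kappa=\sup_{\mathbf{x}\in X}\sqrt{\mathcal{K}(\mathbf{x},\mathbf{x})}$ and $D=\max_{\mathbf{x},\mathbf{u}\in X}\|\mathbf{x}-\mathbf{u}\|$. *)

theory Defs
  imports "HOL-Analysis.Analysis" "HOL-Probability.Probability"
begin

text \<open>Finite kernel combinations  x \<mapsto> sum_{i<m} a_i K(c_i, x)  (pre-RKHS elements)
  and their squared RKHS norm  sum_{i,j<m} a_i a_j K(c_i,c_j).\<close>

definition kfun :: "('a \<Rightarrow> 'a \<Rightarrow> real) \<Rightarrow> nat \<times> (nat \<Rightarrow> 'a) \<times> (nat \<Rightarrow> real) \<Rightarrow> 'a \<Rightarrow> real" where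
  "kfun K r = (case r of (m, c, a) \<Rightarrow> (\<lambda>x. \<Sum>i<m. a i * K (c i) x))"

definition kgram :: "('a \<Rightarrow> 'a \<Rightarrow> real) \<Rightarrow> nat \<times> (nat \<Rightarrow> 'a) \<times> (nat \<Rightarrow> real) \<Rightarrow> real" where
  "kgram K r = (case r of (m, c, a) \<Rightarrow> (\<Sum>i<m. \<Sum>j<m. a i * a j * K (c i) (c j)))"

definition kdist2 :: "('a \<Rightarrow> 'a \<Rightarrow> real) \<Rightarrow> nat \<times> (nat \<Rightarrow> 'a) \<times> (nat \<Rightarrow> real)
    \<Rightarrow> nat \<times> (nat \<Rightarrow> 'a) \<times> (nat \<Rightarrow> real) \<Rightarrow> real" where
  "kdist2 K r1 r2 = (case r1 of (m1, c1, a1) \<Rightarrow> case r2 of (m2, c2, a2) \<Rightarrow>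
      (\<Sum>i<m1. \<Sum>j<m1. a1 i * a1 j * K (c1 i) (c1 j))
    + (\<Sum>i<m2. \<Sum>j<m2. a2 i * a2 j * K (c2 i) (c2 j))
    - 2 * (\<Sum>i<m1. \<Sum>j<m2. a1 i * a2 j * K (c1 i) (c2 j)))"

definition mercer_kernel :: "'a::topological_space set \<Rightarrow> ('a \<Rightarrow> 'a \<Rightarrow> real) \<Rightarrow> bool" where
  "mercer_kernel X K \<longleftrightarrow> continuous_on (X \<times> X) (\<lambda>(x, y). K x y)
     \<and> (\<forall>x\<in>X. \<forall>y\<in>X. K x y = K y x)
     \<and> (\<forall>m c a. (\<forall>i<m. c i \<in> X) \<longrightarrow> kgram K (m, c, a) \<ge> 0)"

text \<open>A sequence of finite kernel combinations (centres in X), Cauchy in the RKHS norm,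
  converging pointwise on X to f (Aronszajn's completion construction of H_K).\<close>
definition rkhs_approx :: "'a set \<Rightarrow> ('a \<Rightarrow> 'a \<Rightarrow> real) \<Rightarrow> ('a \<Rightarrow> real)
    \<Rightarrow> (nat \<Rightarrow> nat \<times> (nat \<Rightarrow> 'a) \<times> (nat \<Rightarrow> real)) \<Rightarrow> bool" where
  "rkhs_approx X K f s \<longleftrightarrow>
     (\<forall>k. \<forall>i<fst (s k). fst (snd (s k)) i \<in> X)
   \<and> (\<forall>e>0. \<exists>N. \<forall>k\<ge>N. \<forall>l\<ge>N. kdist2 K (s k) (s l) < e)
   \<and> (\<forall>x\<in>X. (\<lambda>k. kfun K (s k) x) \<longlonglongrightarrow> f x)"

definition in_rkhs :: "'a set \<Rightarrow> ('a \<Rightarrow> 'a \<Rightarrow> real) \<Rightarrow> ('a \<Rightarrow> real) \<Rightarrow> bool" where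
  "in_rkhs X K f \<longleftrightarrow> (\<exists>s. rkhs_approx X K f s)"

definition rkhs_norm :: "'a set \<Rightarrow> ('a \<Rightarrow> 'a \<Rightarrow> real) \<Rightarrow> ('a \<Rightarrow> real) \<Rightarrow> real" where
  "rkhs_norm X K f = Inf {L. \<exists>s. rkhs_approx X K f s \<and> (\<lambda>k. sqrt (kgram K (s k))) \<longlonglongrightarrow> L}"

definition F_ball :: "(real^'p) set \<Rightarrow> (real^'p \<Rightarrow> real^'p \<Rightarrow> real) \<Rightarrow> real
    \<Rightarrow> ('p \<Rightarrow> real^'p \<Rightarrow> real) set" where
  "F_ball X K r = {f. (\<forall>j. in_rkhs X K (f j)) \<and> (\<Sum>j\<in>UNIV. rkhs_norm X K (f j)) \<le> r}"

definition vapp :: "('p \<Rightarrow> real^'p \<Rightarrow> real) \<Rightarrow> real^'p \<Rightarrow> real^'p" where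
  "vapp f x = (\<chi> j. f j x)"

definition weight :: "real \<Rightarrow> real^'p \<Rightarrow> real" where
  "weight s x = exp (- (norm x)\<^sup>2 / (2 * s\<^sup>2))"

definition emp_err :: "real \<Rightarrow> nat \<Rightarrow> (nat \<Rightarrow> (real^'p) \<times> real) \<Rightarrow> ('p \<Rightarrow> real^'p \<Rightarrow> real) \<Rightarrow> real" where
  "emp_err s n Z f = (1 / (real n)\<^sup>2) * (\<Sum>i<n. \<Sum>j<n.
      weight s (fst (Z j) - fst (Z i)) *
      (snd (Z i) - snd (Z j) + vapp f (fst (Z i)) \<bullet> (fst (Z j) - fst (Z i)))\<^sup>2)"

definition exp_err :: "real \<Rightarrow> ((real^'p) \<times> real) measure \<Rightarrow> ('p \<Rightarrow> real^'p \<Rightarrow> real) \<Rightarrow> real" where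
  "exp_err s \<rho> f = (\<integral>z. (\<integral>w. weight s (fst z - fst w) *
      (snd z - snd w + vapp f (fst z) \<bullet> (fst w - fst z))\<^sup>2 \<partial>\<rho>) \<partial>\<rho>)"

definition S_dev :: "(real^'p) set \<Rightarrow> (real^'p \<Rightarrow> real^'p \<Rightarrow> real) \<Rightarrow> real \<Rightarrow> ((real^'p) \<times> real) measure
    \<Rightarrow> nat \<Rightarrow> real \<Rightarrow> (nat \<Rightarrow> (real^'p) \<times> real) \<Rightarrow> real" where
  "S_dev X K s \<rho> n r Z = (SUP f\<in>F_ball X K r. \<bar>emp_err s n Z f - exp_err s \<rho> f\<bar>)"

definition kappa :: "(real^'p) set \<Rightarrow> (real^'p \<Rightarrow> real^'p \<Rightarrow> real) \<Rightarrow> real" where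
  "kappa X K = (SUP x\<in>X. sqrt (K x x))"

end

theory Submission
  imports Defs
begin


lemma mcd_mgf:
  fixes M :: "'a measure" and c :: real
  assumes PM: "prob_space M" and c0: "c \<ge> 0"
  and fm0: "f \<in> borel_measurable (PiM {..<n} (\<lambda>_. M))"
  and fB0: "\<forall>Z\<in>space (PiM {..<n} (\<lambda>_. M)). \<bar>f Z\<bar> \<le> B"
  and fc0: "\<forall>Z\<in>space (PiM {..<n} (\<lambda>_. M)). \<forall>k<n. \<forall>w\<in>space M. \<bar>f (Z(k:=w)) - f Z\<bar> \<le> c"
  and l0: "l > 0"
  shows "(\<integral>\<^sup>+Z. ennreal (exp (l * (f Z - (\<integral>Z'. f Z' \<partial>PiM {..<n} (\<lambda>_. M))))) \<partial>PiM {..<n} (\<lambda>_. M))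
       \<le> ennreal (exp (l\<^sup>2 * real n * c\<^sup>2 / 8))"
  using fm0 fB0 fc0
proof (induction n arbitrary: f)
  case 0
  interpret M: prob_space M by (rule PM)
  interpret PS: product_prob_space "\<lambda>_. M" UNIV
    by (simp add: product_prob_space_def product_prob_space_axioms_def product_sigma_finite_def
        PM M.sigma_finite_measure_axioms)
  interpret P: prob_space "PiM {..<0::nat} (\<lambda>_. M)" by (rule prob_space_PiM) (rule PM)
  let ?u = "\<lambda>_::nat. undefined :: 'a"
  have sp: "space (PiM {..<0::nat} (\<lambda>_. M)) = {?u}" by (simp add: PiM_empty)
  have "(\<integral>Z'. f Z' \<partial>PiM {..<0::nat} (\<lambda>_. M)) = (\<integral>Z'. f ?u \<partial>PiM {..<0::nat} (\<lambda>_. M))"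
    by (rule Bochner_Integration.integral_cong[OF refl]) (auto simp: PiM_empty)
  also have "\<dots> = f ?u" using P.prob_space by simp
  finally have e: "(\<integral>Z'. f Z' \<partial>PiM {..<0::nat} (\<lambda>_. M)) = f ?u" .
  have "(\<integral>\<^sup>+Z. ennreal (exp (l * (f Z - (\<integral>Z'. f Z' \<partial>PiM {..<0::nat} (\<lambda>_. M))))) \<partial>PiM {..<0::nat} (\<lambda>_. M))
     = (\<integral>\<^sup>+Z. ennreal 1 \<partial>PiM {..<0::nat} (\<lambda>_. M))"
    unfolding e by (rule nn_integral_cong) (auto simp: PiM_empty)
  also have "\<dots> = 1" using P.emeasure_space_1 by simp
  finally show ?case by simp
next
  case (Suc n)
  interpret M: prob_space M by (rule PM)
  interpret PS: product_prob_space "\<lambda>_. M" UNIV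
    by (simp add: product_prob_space_def product_prob_space_axioms_def product_sigma_finite_def
        PM M.sigma_finite_measure_axioms)
  let ?P = "PiM {..<n} (\<lambda>_. M)" and ?P' = "PiM {..<Suc n} (\<lambda>_. M)"
  interpret P: prob_space ?P by (rule prob_space_PiM) (rule PM)
  interpret P': prob_space ?P' by (rule prob_space_PiM) (rule PM)
  have ins: "{..<Suc n} = insert n {..<n}" by auto
  note fm = Suc.prems(1) and fB = Suc.prems(2) and fc = Suc.prems(3)
  have upd_sp: "z(n:=y) \<in> space ?P'" if "z \<in> space ?P" "y \<in> space M" for z y
    using that by (auto simp: space_PiM PiE_def extensional_def Pi_def)
  have fm2: "(\<lambda>(z,y). f (z(n:=y))) \<in> borel_measurable (?P \<Otimes>\<^sub>M M)"
  proof -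
    have "(\<lambda>(z,y). z(n:=y)) \<in> measurable (?P \<Otimes>\<^sub>M M) ?P'"
      using measurable_add_dim[of n "{..<n}" "\<lambda>_. M"] by (simp add: ins)
    from measurable_comp[OF this fm] show ?thesis by (simp add: comp_def case_prod_unfold)
  qed
  have fm1: "(\<lambda>y. f (z(n:=y))) \<in> borel_measurable M" if "z \<in> space ?P" for z
    using measurable_Pair2[OF fm2 that] by simp
  have int1: "integrable M (\<lambda>y. f (z(n:=y)))" if "z \<in> space ?P" for z
    by (rule M.integrable_const_bound[where B=B]) (use fm1[OF that] fB upd_sp[OF that] in auto)
  define g where "g z = (\<integral>y. f (z(n:=y)) \<partial>M)" for z
  have gm: "g \<in> borel_measurable ?P"
    unfolding g_def using M.borel_measurable_lebesgue_integral[OF fm2] by simp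
  have gB: "\<forall>z\<in>space ?P. \<bar>g z\<bar> \<le> B"
  proof
    fix z assume z: "z \<in> space ?P"
    have "\<bar>g z\<bar> \<le> (\<integral>y. \<bar>f (z(n:=y))\<bar> \<partial>M)" unfolding g_def by (rule integral_abs_bound)
    also have "\<dots> \<le> (\<integral>y. B \<partial>M)"
      by (rule integral_mono) (use int1[OF z] fB upd_sp[OF z] in auto)
    finally show "\<bar>g z\<bar> \<le> B" by (simp add: M.prob_space)
  qed
  have gc: "\<forall>Z\<in>space ?P. \<forall>k<n. \<forall>w\<in>space M. \<bar>g (Z(k:=w)) - g Z\<bar> \<le> c"
  proof (intro ballI allI impI)
    fix z k w assume z: "z \<in> space ?P" and k: "k < n" and w: "w \<in> space M"
    have zk: "z(k:=w) \<in> space ?P" using z k w by (auto simp: space_PiM PiE_def extensional_def Pi_def)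
    have "g (z(k:=w)) - g z = (\<integral>y. f (z(k:=w,n:=y)) - f (z(n:=y)) \<partial>M)"
      unfolding g_def by (rule Bochner_Integration.integral_diff[symmetric]) (use int1 zk z in auto)
    also have "\<bar>\<dots>\<bar> \<le> (\<integral>y. \<bar>f (z(k:=w,n:=y)) - f (z(n:=y))\<bar> \<partial>M)" by (rule integral_abs_bound)
    also have "\<dots> \<le> (\<integral>y. c \<partial>M)"
    proof (rule integral_mono)
      show "integrable M (\<lambda>y. \<bar>f (z(k:=w,n:=y)) - f (z(n:=y))\<bar>)"
        using int1[OF zk] int1[OF z] by auto
      fix y assume y: "y \<in> space M"
      have "z(k:=w,n:=y) = (z(n:=y))(k:=w)" using k by (auto simp: fun_eq_iff)
      moreover have "\<bar>f ((z(n:=y))(k:=w)) - f (z(n:=y))\<bar> \<le> c"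
        by (rule fc[rule_format, OF upd_sp[OF z y]]) (use k w in auto)
      ultimately show "\<bar>f (z(k:=w,n:=y)) - f (z(n:=y))\<bar> \<le> c" by simp
    qed simp
    finally show "\<bar>g (z(k:=w)) - g z\<bar> \<le> c" by (simp add: M.prob_space)
  qed
  have IH: "(\<integral>\<^sup>+Z. ennreal (exp (l * (g Z - (\<integral>Z'. g Z' \<partial>?P)))) \<partial>?P) \<le> ennreal (exp (l\<^sup>2 * real n * c\<^sup>2 / 8))"
    by (rule Suc.IH[OF gm gB gc])
  have intf: "integrable ?P' f"
    by (rule P'.integrable_const_bound[where B=B]) (use fm fB in auto)
  have Ef: "(\<integral>Z. f Z \<partial>?P') = (\<integral>z. g z \<partial>?P)"
    unfolding g_def ins using PS.product_integral_insert[of "{..<n}" n f] intf ins by simp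
  define E where "E = (\<integral>z. g z \<partial>?P)"
  have step: "(\<integral>\<^sup>+y. ennreal (exp (l * (f (z(n:=y)) - E))) \<partial>M)
      \<le> ennreal (exp (l * (g z - E))) * ennreal (exp (l\<^sup>2 * c\<^sup>2 / 8))" if z: "z \<in> space ?P" for z
  proof -
    define h where "h y = f (z(n:=y)) - g z" for y
    have ne: "space M \<noteq> {}" by (rule M.not_empty)
    define a where "a = (INF y\<in>space M. f (z(n:=y))) - g z"
    have bdd: "bdd_below ((\<lambda>y. f (z(n:=y))) ` space M)"
      using fB upd_sp[OF z] by (intro bdd_belowI[where m="-B"]) force
    have hin: "h y \<in> {a..a+c}" if y: "y \<in> space M" for y
    proof -
      have "(INF y\<in>space M. f (z(n:=y))) \<le> f (z(n:=y))" by (rule cINF_lower[OF bdd y])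
      moreover have "f (z(n:=y)) - c \<le> (INF y\<in>space M. f (z(n:=y)))"
      proof (rule cINF_greatest[OF ne])
        fix y' assume y': "y' \<in> space M"
        have "(z(n:=y'))(n:=y) = z(n:=y)" by simp
        then have "\<bar>f (z(n:=y)) - f (z(n:=y'))\<bar> \<le> c"
          using fc[rule_format, OF upd_sp[OF z y'], of n y] y by simp
        then show "f (z(n:=y)) - c \<le> f (z(n:=y'))" by simp
      qed
      ultimately show ?thesis unfolding h_def a_def by auto
    qed
    have hm: "h \<in> borel_measurable M" unfolding h_def using fm1[OF z] by measurable
    interpret H: interval_bounded_random_variable M h a "a+c"
      by unfold_locales (use hm hin in auto)
    have Eh: "M.expectation h = 0"
      unfolding h_def g_def using int1[OF z]
      by (simp add: Bochner_Integration.integral_diff M.prob_space)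
    have "(\<integral>\<^sup>+y. ennreal (exp (l * (f (z(n:=y)) - E))) \<partial>M)
        = (\<integral>\<^sup>+y. ennreal (exp (l * (g z - E))) * ennreal (exp (l * h y)) \<partial>M)"
      by (rule nn_integral_cong)
         (simp add: h_def ennreal_mult'[symmetric] exp_add[symmetric] algebra_simps)
    also have "\<dots> = ennreal (exp (l * (g z - E))) * (\<integral>\<^sup>+y. ennreal (exp (l * h y)) \<partial>M)"
      by (rule nn_integral_cmult) (use hm in measurable)
    also have "\<dots> \<le> ennreal (exp (l * (g z - E))) * ennreal (exp (l\<^sup>2 * c\<^sup>2 / 8))"
      using H.Hoeffdings_lemma_nn_integral_0[OF l0 Eh] by (intro mult_left_mono) auto
    finally show ?thesis .
  qed
  have "(\<integral>\<^sup>+Z. ennreal (exp (l * (f Z - (\<integral>Z'. f Z' \<partial>?P')))) \<partial>?P')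
      = (\<integral>\<^sup>+z. (\<integral>\<^sup>+y. ennreal (exp (l * (f (z(n:=y)) - E))) \<partial>M) \<partial>?P)"
  proof -
    have "(\<integral>Z'. f Z' \<partial>?P') = E" using Ef E_def by simp
    moreover have "(\<lambda>Z. ennreal (exp (l * (f Z - E)))) \<in> borel_measurable (PiM (insert n {..<n}) (\<lambda>_. M))"
      using fm ins by simp
    ultimately show ?thesis
      using PS.product_nn_integral_insert[of "{..<n}" n "\<lambda>Z. ennreal (exp (l * (f Z - E)))"] ins
      by simp
  qed
  also have "\<dots> \<le> (\<integral>\<^sup>+z. ennreal (exp (l * (g z - E))) * ennreal (exp (l\<^sup>2 * c\<^sup>2 / 8)) \<partial>?P)"
    by (rule nn_integral_mono) (use step in auto)
  also have "\<dots> = (\<integral>\<^sup>+z. ennreal (exp (l * (g z - E))) \<partial>?P) * ennreal (exp (l\<^sup>2 * c\<^sup>2 / 8))"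
    by (rule nn_integral_multc) (use gm in measurable)
  also have "\<dots> \<le> ennreal (exp (l\<^sup>2 * real n * c\<^sup>2 / 8)) * ennreal (exp (l\<^sup>2 * c\<^sup>2 / 8))"
    using IH unfolding E_def by (intro mult_right_mono) auto
  also have "\<dots> = ennreal (exp (l\<^sup>2 * real (Suc n) * c\<^sup>2 / 8))"
    by (simp add: ennreal_mult'[symmetric] exp_add[symmetric] algebra_simps)
  finally show ?case .
qed

lemma mcd_one:
  fixes M :: "'a measure" and c :: real
  assumes PM: "prob_space M" and c0: "c > 0" and n0: "n > 0"
  and fm: "f \<in> borel_measurable (PiM {..<n} (\<lambda>_. M))"
  and fB: "\<forall>Z\<in>space (PiM {..<n} (\<lambda>_. M)). \<bar>f Z\<bar> \<le> B"
  and fc: "\<forall>Z\<in>space (PiM {..<n} (\<lambda>_. M)). \<forall>k<n. \<forall>w\<in>space M. \<bar>f (Z(k:=w)) - f Z\<bar> \<le> c"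
  and e0: "\<epsilon> > 0"
  shows "measure (PiM {..<n} (\<lambda>_. M)) {Z\<in>space (PiM {..<n} (\<lambda>_. M)). \<epsilon> \<le> f Z - (\<integral>Z'. f Z' \<partial>PiM {..<n} (\<lambda>_. M))}
     \<le> exp (- 2 * \<epsilon>\<^sup>2 / (real n * c\<^sup>2))"
proof -
  let ?P = "PiM {..<n} (\<lambda>_. M)"
  interpret P: prob_space ?P by (rule prob_space_PiM) (rule PM)
  define E where "E = (\<integral>Z'. f Z' \<partial>?P)"
  define l where "l = 4 * \<epsilon> / (real n * c\<^sup>2)"
  have l0: "l > 0" using c0 n0 e0 by (simp add: l_def)
  define A where "A = {Z\<in>space ?P. \<epsilon> \<le> f Z - E}"
  have A: "A \<in> sets ?P" unfolding A_def using fm by measurable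
  have "emeasure ?P A = (\<integral>\<^sup>+Z. indicator A Z \<partial>?P)" using A by simp
  also have "\<dots> \<le> (\<integral>\<^sup>+Z. ennreal (exp (l * (f Z - E))) * ennreal (exp (- l * \<epsilon>)) \<partial>?P)"
  proof (rule nn_integral_mono)
    fix Z assume Z: "Z \<in> space ?P"
    show "indicator A Z \<le> ennreal (exp (l * (f Z - E))) * ennreal (exp (- l * \<epsilon>))"
    proof (cases "Z \<in> A")
      case True
      then have "l * \<epsilon> \<le> l * (f Z - E)" using l0 by (simp add: A_def)
      then have "1 \<le> exp (l * (f Z - E)) * exp (- l * \<epsilon>)"
        by (simp add: exp_add[symmetric])
      then show ?thesis using True by (simp add: ennreal_mult'[symmetric])
    qed simp
  qed
  also have "\<dots> = (\<integral>\<^sup>+Z. ennreal (exp (l * (f Z - E))) \<partial>?P) * ennreal (exp (- l * \<epsilon>))"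
    by (rule nn_integral_multc) (use fm in measurable)
  also have "\<dots> \<le> ennreal (exp (l\<^sup>2 * real n * c\<^sup>2 / 8)) * ennreal (exp (- l * \<epsilon>))"
    using mcd_mgf[OF PM less_imp_le[OF c0] fm fB fc l0] unfolding E_def by (intro mult_right_mono) auto
  also have "\<dots> = ennreal (exp (- 2 * \<epsilon>\<^sup>2 / (real n * c\<^sup>2)))"
  proof -
    have "l\<^sup>2 * real n * c\<^sup>2 / 8 + - l * \<epsilon> = - 2 * \<epsilon>\<^sup>2 / (real n * c\<^sup>2)"
      using c0 n0 by (simp add: l_def field_simps power2_eq_square)
    then show ?thesis by (simp add: ennreal_mult'[symmetric] exp_add[symmetric])
  qed
  finally have "emeasure ?P A \<le> ennreal (exp (- 2 * \<epsilon>\<^sup>2 / (real n * c\<^sup>2)))" .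
  then show ?thesis unfolding A_def[symmetric] E_def[symmetric]
    by (simp add: P.emeasure_eq_measure)
qed

lemma mcdiarmid:
  fixes M :: "'a measure" and c :: real
  assumes PM: "prob_space M" and c0: "c > 0" and n0: "n > 0"
  and fm: "f \<in> borel_measurable (PiM {..<n} (\<lambda>_. M))"
  and fB: "\<forall>Z\<in>space (PiM {..<n} (\<lambda>_. M)). \<bar>f Z\<bar> \<le> B"
  and fc: "\<forall>Z\<in>space (PiM {..<n} (\<lambda>_. M)). \<forall>k<n. \<forall>w\<in>space M. \<bar>f (Z(k:=w)) - f Z\<bar> \<le> c"
  and e0: "\<epsilon> > 0"
  shows "measure (PiM {..<n} (\<lambda>_. M)) {Z\<in>space (PiM {..<n} (\<lambda>_. M)). \<epsilon> \<le> \<bar>f Z - (\<integral>Z'. f Z' \<partial>PiM {..<n} (\<lambda>_. M))\<bar>}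
     \<le> 2 * exp (- 2 * \<epsilon>\<^sup>2 / (real n * c\<^sup>2))"
proof -
  let ?P = "PiM {..<n} (\<lambda>_. M)"
  interpret P: prob_space ?P by (rule prob_space_PiM) (rule PM)
  define E where "E = (\<integral>Z'. f Z' \<partial>?P)"
  have 1: "measure ?P {Z\<in>space ?P. \<epsilon> \<le> f Z - E} \<le> exp (- 2 * \<epsilon>\<^sup>2 / (real n * c\<^sup>2))"
    using mcd_one[OF PM c0 n0 fm fB fc e0] by (simp add: E_def)
  have mfm: "(\<lambda>Z. - f Z) \<in> borel_measurable ?P" using fm by measurable
  have "measure ?P {Z\<in>space ?P. \<epsilon> \<le> - f Z - (\<integral>Z'. - f Z' \<partial>?P)} \<le> exp (- 2 * \<epsilon>\<^sup>2 / (real n * c\<^sup>2))"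
    by (rule mcd_one[OF PM c0 n0 mfm _ _ e0, where B=B]) (use fB fc in \<open>auto simp: abs_minus_commute\<close>)
  then have 2: "measure ?P {Z\<in>space ?P. \<epsilon> \<le> E - f Z} \<le> exp (- 2 * \<epsilon>\<^sup>2 / (real n * c\<^sup>2))"
    by (simp add: E_def)
  have "{Z\<in>space ?P. \<epsilon> \<le> \<bar>f Z - E\<bar>} = {Z\<in>space ?P. \<epsilon> \<le> f Z - E} \<union> {Z\<in>space ?P. \<epsilon> \<le> E - f Z}"
    by auto
  then have "measure ?P {Z\<in>space ?P. \<epsilon> \<le> \<bar>f Z - E\<bar>} \<le>
      measure ?P {Z\<in>space ?P. \<epsilon> \<le> f Z - E} + measure ?P {Z\<in>space ?P. \<epsilon> \<le> E - f Z}"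
    by (simp only:) (rule measure_Un_le; use fm in measurable)
  with 1 2 show ?thesis by (simp add: E_def)
qed



definition kcross :: "('a \<Rightarrow> 'a \<Rightarrow> real) \<Rightarrow> nat \<times> (nat \<Rightarrow> 'a) \<times> (nat \<Rightarrow> real) \<Rightarrow> nat \<times> (nat \<Rightarrow> 'a) \<times> (nat \<Rightarrow> real) \<Rightarrow> real" where
  "kcross K r1 r2 = (case r1 of (m1, c1, a1) \<Rightarrow> case r2 of (m2, c2, a2) \<Rightarrow>
      (\<Sum>i<m1. \<Sum>j<m2. a1 i * a2 j * K (c1 i) (c2 j)))"

definition klin :: "real \<Rightarrow> nat \<times> (nat \<Rightarrow> 'a) \<times> (nat \<Rightarrow> real) \<Rightarrow> real \<Rightarrow> nat \<times> (nat \<Rightarrow> 'a) \<times> (nat \<Rightarrow> real) \<Rightarrow> nat \<times> (nat \<Rightarrow> 'a) \<times> (nat \<Rightarrow> real)" where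
  "klin u r1 v r2 = (case r1 of (m1, c1, a1) \<Rightarrow> case r2 of (m2, c2, a2) \<Rightarrow>
      (m1 + m2, (\<lambda>i. if i < m1 then c1 i else c2 (i - m1)), (\<lambda>i. if i < m1 then u * a1 i else v * a2 (i - m1))))"

lemma sum_split_add: "(\<Sum>i<m1+m2. h i) = (\<Sum>i<m1. h i) + (\<Sum>i<m2. h (m1 + i::nat)::real)"
  by (induction m2) (simp_all add: add.assoc)

lemma kgram_cross: "kgram K r = kcross K r r"
  by (simp add: kgram_def kcross_def split: prod.splits)

lemma kdist2_cross: "kdist2 K r1 r2 = kcross K r1 r1 + kcross K r2 r2 - 2 * kcross K r1 r2"
  by (simp add: kdist2_def kcross_def split: prod.splits)

lemma kfun_cross: "kfun K r x = kcross K r (1, \<lambda>_. x, \<lambda>_. 1)"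
  by (simp add: kfun_def kcross_def split: prod.splits)

lemma kcross_single: "kcross K (1, \<lambda>_. x, \<lambda>_. 1) (1, \<lambda>_. x, \<lambda>_. 1) = K x x"
  by (simp add: kcross_def)

lemma kcross_single': "kcross K (Suc 0, \<lambda>_. x, \<lambda>_. 1) (Suc 0, \<lambda>_. x, \<lambda>_. 1) = K x x"
  by (simp add: kcross_def)

lemma kcross_lin1: "kcross K (klin u r1 v r2) r3 = u * kcross K r1 r3 + v * kcross K r2 r3"
proof -
  obtain m1 c1 a1 m2 c2 a2 m3 c3 a3 where r: "r1 = (m1,c1,a1)" "r2 = (m2,c2,a2)" "r3 = (m3,c3,a3)"
    by (metis prod.exhaust)
  show ?thesis unfolding r klin_def kcross_def
    by (simp add: sum_split_add sum_distrib_left algebra_simps)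
qed

lemma kcross_lin2: "kcross K r3 (klin u r1 v r2) = u * kcross K r3 r1 + v * kcross K r3 r2"
proof -
  obtain m1 c1 a1 m2 c2 a2 m3 c3 a3 where r: "r1 = (m1,c1,a1)" "r2 = (m2,c2,a2)" "r3 = (m3,c3,a3)"
    by (metis prod.exhaust)
  show ?thesis unfolding r klin_def kcross_def
    by (simp add: sum_split_add sum_distrib_left sum.distrib algebra_simps)
qed

definition kcent :: "'a set \<Rightarrow> nat \<times> (nat \<Rightarrow> 'a) \<times> (nat \<Rightarrow> real) \<Rightarrow> bool" where
  "kcent X r \<longleftrightarrow> (\<forall>i<fst r. fst (snd r) i \<in> X)"

lemma kcent_klin: "kcent X r1 \<Longrightarrow> kcent X r2 \<Longrightarrow> kcent X (klin u r1 v r2)"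
  by (auto simp: kcent_def klin_def split: prod.splits)

lemma kcent_single: "x \<in> X \<Longrightarrow> kcent X (1, \<lambda>_. x, \<lambda>_. 1)"
  by (simp add: kcent_def)

lemma kcross_sym:
  assumes "mercer_kernel X K" "kcent X r1" "kcent X r2"
  shows "kcross K r2 r1 = kcross K r1 r2"
proof -
  obtain m1 c1 a1 m2 c2 a2 where r: "r1 = (m1,c1,a1)" "r2 = (m2,c2,a2)"
    by (metis prod.exhaust)
  have sym: "\<forall>x\<in>X. \<forall>y\<in>X. K x y = K y x" using assms(1) by (simp add: mercer_kernel_def)
  have "(\<Sum>i<m2. \<Sum>j<m1. a2 i * a1 j * K (c2 i) (c1 j)) = (\<Sum>j<m1. \<Sum>i<m2. a2 i * a1 j * K (c2 i) (c1 j))"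
    by (rule sum.swap)
  also have "\<dots> = (\<Sum>j<m1. \<Sum>i<m2. a1 j * a2 i * K (c1 j) (c2 i))"
    using assms(2,3) sym by (intro sum.cong refl) (auto simp: r kcent_def)
  finally show ?thesis by (simp add: r kcross_def)
qed

lemma kcross_psd:
  assumes "mercer_kernel X K" "kcent X r"
  shows "kcross K r r \<ge> 0"
proof -
  obtain m c a where r: "r = (m,c,a)" by (metis prod.exhaust)
  have "kgram K (m,c,a) \<ge> 0" using assms by (auto simp: mercer_kernel_def kcent_def r)
  then show ?thesis by (simp add: r kgram_cross)
qed

lemma kcross_CS:
  assumes mk: "mercer_kernel X K" and c1: "kcent X r1" and c2: "kcent X r2"
  shows "(kcross K r1 r2)\<^sup>2 \<le> kcross K r1 r1 * kcross K r2 r2"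
proof -
  define g1 g2 h where "g1 = kcross K r1 r1" "g2 = kcross K r2 r2" "h = kcross K r1 r2"
  have q: "0 \<le> t\<^sup>2 * g1 + 2 * t * h + g2" for t
  proof -
    have "0 \<le> kcross K (klin t r1 1 r2) (klin t r1 1 r2)"
      by (rule kcross_psd[OF mk kcent_klin[OF c1 c2]])
    also have "\<dots> = t\<^sup>2 * g1 + 2 * t * h + g2"
      using kcross_sym[OF mk c1 c2]
      by (simp add: kcross_lin1 kcross_lin2 g1_g2_h_def algebra_simps power2_eq_square)
    finally show ?thesis .
  qed
  have g1: "g1 \<ge> 0" "g2 \<ge> 0" unfolding g1_g2_h_def by (auto intro: kcross_psd mk c1 c2)
  show ?thesis
  proof (cases "g1 = 0")
    case True
    have "h = 0"
    proof (rule ccontr)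
      assume "h \<noteq> 0"
      have "0 \<le> 2 * (- (g2 + 1) / (2 * h)) * h + g2" using q[of "- (g2 + 1) / (2 * h)"] True by simp
      also have "\<dots> = -1" using \<open>h \<noteq> 0\<close> by (simp add: field_simps)
      finally show False by simp
    qed
    then show ?thesis using True by (simp add: g1_g2_h_def[symmetric])
  next
    case False
    then have gp: "g1 > 0" using g1 by simp
    have "0 \<le> (- h / g1)\<^sup>2 * g1 + 2 * (- h / g1) * h + g2" by (rule q)
    also have "\<dots> = g2 - h\<^sup>2 / g1" using gp by (simp add: field_simps power2_eq_square)
    finally have "h\<^sup>2 \<le> g1 * g2" using gp by (simp add: field_simps)
    then show ?thesis by (simp add: g1_g2_h_def)
  qed
qed

lemma kcross_abs_le:
  assumes mk: "mercer_kernel X K" and c1: "kcent X r1" and c2: "kcent X r2"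
  shows "\<bar>kcross K r1 r2\<bar> \<le> sqrt (kcross K r1 r1) * sqrt (kcross K r2 r2)"
proof -
  have "\<bar>kcross K r1 r2\<bar> = sqrt ((kcross K r1 r2)\<^sup>2)" by simp
  also have "\<dots> \<le> sqrt (kcross K r1 r1 * kcross K r2 r2)"
    by (rule real_sqrt_le_mono[OF kcross_CS[OF assms]])
  finally show ?thesis by (simp add: real_sqrt_mult)
qed

lemma kfun_bound:
  assumes mk: "mercer_kernel X K" and c: "kcent X r" and x: "x \<in> X"
  shows "\<bar>kfun K r x\<bar> \<le> sqrt (kgram K r) * sqrt (K x x)"
  using kcross_abs_le[OF mk c kcent_single[OF x]]
  by (simp add: kfun_cross kgram_cross kcross_single kcross_single')

lemma Kxx_nonneg: "mercer_kernel X K \<Longrightarrow> x \<in> X \<Longrightarrow> K x x \<ge> 0"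
  using kcross_psd[OF _ kcent_single[of x X], of K] by (simp add: kcross_single kcross_single')

lemma kgram_nonneg: "mercer_kernel X K \<Longrightarrow> kcent X r \<Longrightarrow> kgram K r \<ge> 0"
  by (simp add: kgram_cross kcross_psd)

lemma kdist2_lin: 
  assumes mk: "mercer_kernel X K" and c1: "kcent X r1" and c2: "kcent X r2"
  shows "kdist2 K r1 r2 = kcross K (klin 1 r1 (-1) r2) (klin 1 r1 (-1) r2)"
  using kcross_sym[OF mk c1 c2]
  by (simp add: kdist2_cross kcross_lin1 kcross_lin2 algebra_simps)

lemma kdist2_nonneg:
  assumes mk: "mercer_kernel X K" and c1: "kcent X r1" and c2: "kcent X r2"
  shows "kdist2 K r1 r2 \<ge> 0"
  unfolding kdist2_lin[OF assms] by (rule kcross_psd[OF mk kcent_klin[OF c1 c2]])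

lemma kfun_diff:
  assumes mk: "mercer_kernel X K" and c1: "kcent X r1" and c2: "kcent X r2" and x: "x \<in> X"
  shows "\<bar>kfun K r1 x - kfun K r2 x\<bar> \<le> sqrt (kdist2 K r1 r2) * sqrt (K x x)"
proof -
  have "kfun K r1 x - kfun K r2 x = kcross K (klin 1 r1 (-1) r2) (1, \<lambda>_. x, \<lambda>_. 1)"
    by (simp add: kfun_cross kcross_lin1)
  also have "\<bar>\<dots>\<bar> \<le> sqrt (kdist2 K r1 r2) * sqrt (K x x)"
    using kcross_abs_le[OF mk kcent_klin[OF c1 c2] kcent_single[OF x]]
    by (simp add: kdist2_lin[OF assms(1-3)] kcross_single kcross_single')
  finally show ?thesis .
qed

lemma sqrt_gram_diff:
  assumes mk: "mercer_kernel X K" and c1: "kcent X r1" and c2: "kcent X r2"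
  shows "\<bar>sqrt (kgram K r1) - sqrt (kgram K r2)\<bar> \<le> sqrt (kdist2 K r1 r2)"
proof -
  define a b h where "a = sqrt (kgram K r1)" "b = sqrt (kgram K r2)" "h = kcross K r1 r2"
  have g: "kgram K r1 \<ge> 0" "kgram K r2 \<ge> 0" using kgram_nonneg[OF mk c1] kgram_nonneg[OF mk c2] by auto
  have "h \<le> a * b" using kcross_abs_le[OF mk c1 c2] by (simp add: a_b_h_def kgram_cross)
  moreover have "kdist2 K r1 r2 = a\<^sup>2 + b\<^sup>2 - 2 * h" using g by (simp add: kdist2_cross a_b_h_def kgram_cross)
  ultimately have "(a - b)\<^sup>2 \<le> kdist2 K r1 r2" by (simp add: power2_eq_square algebra_simps)
  then have "sqrt ((a - b)\<^sup>2) \<le> sqrt (kdist2 K r1 r2)" by (rule real_sqrt_le_mono)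
  then show ?thesis by (simp add: a_b_h_def)
qed

lemma approx_kcent: "rkhs_approx X K f s \<Longrightarrow> kcent X (s k)"
  by (simp add: rkhs_approx_def kcent_def)

lemma approx_gram_conv:
  assumes mk: "mercer_kernel X K" and ap: "rkhs_approx X K f s"
  shows "convergent (\<lambda>k. sqrt (kgram K (s k)))"
proof -
  have "Cauchy (\<lambda>k. sqrt (kgram K (s k)))"
  proof (rule CauchyI)
    fix e :: real assume e: "e > 0"
    then obtain N where N: "\<forall>k\<ge>N. \<forall>l\<ge>N. kdist2 K (s k) (s l) < e\<^sup>2"
      using ap unfolding rkhs_approx_def by (meson zero_less_power)
    show "\<exists>M. \<forall>m\<ge>M. \<forall>n\<ge>M. norm (sqrt (kgram K (s m)) - sqrt (kgram K (s n))) < e"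
    proof (intro exI allI impI)
      fix m n assume "N \<le> m" "N \<le> n"
      then have "kdist2 K (s m) (s n) < e\<^sup>2" using N by auto
      then have "sqrt (kdist2 K (s m) (s n)) < sqrt (e\<^sup>2)" by (rule real_sqrt_less_mono)
      then have "sqrt (kdist2 K (s m) (s n)) < e" using e by simp
      with sqrt_gram_diff[OF mk approx_kcent[OF ap, of m] approx_kcent[OF ap, of n]]
      show "norm (sqrt (kgram K (s m)) - sqrt (kgram K (s n))) < e" by simp
    qed
  qed
  then show ?thesis by (simp add: Cauchy_convergent_iff)
qed

lemma approx_bound_L:
  assumes mk: "mercer_kernel X K" and ap: "rkhs_approx X K f s"
    and L: "(\<lambda>k. sqrt (kgram K (s k))) \<longlonglongrightarrow> L" and x: "x \<in> X"
  shows "\<bar>f x\<bar> \<le> L * sqrt (K x x)"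
proof -
  have "(\<lambda>k. \<bar>kfun K (s k) x\<bar>) \<longlonglongrightarrow> \<bar>f x\<bar>"
    using ap x unfolding rkhs_approx_def by (auto intro: tendsto_rabs)
  moreover have "(\<lambda>k. sqrt (kgram K (s k)) * sqrt (K x x)) \<longlonglongrightarrow> L * sqrt (K x x)"
    by (intro tendsto_mult L tendsto_const)
  ultimately show ?thesis
    by (rule LIMSEQ_le) (use kfun_bound[OF mk approx_kcent[OF ap] x] in auto)
qed

lemma approx_L_nonneg:
  assumes mk: "mercer_kernel X K" and ap: "rkhs_approx X K f s"
    and L: "(\<lambda>k. sqrt (kgram K (s k))) \<longlonglongrightarrow> L"
  shows "L \<ge> 0"
  by (rule LIMSEQ_le_const[OF L]) (use kgram_nonneg[OF mk approx_kcent[OF ap]] in auto)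

lemma rkhs_bound:
  assumes mk: "mercer_kernel X K" and f: "in_rkhs X K f" and x: "x \<in> X"
  shows "\<bar>f x\<bar> \<le> rkhs_norm X K f * sqrt (K x x)"
proof -
  define SS where "SS = {L. \<exists>s. rkhs_approx X K f s \<and> (\<lambda>k. sqrt (kgram K (s k))) \<longlonglongrightarrow> L}"
  obtain s where s: "rkhs_approx X K f s" using f by (auto simp: in_rkhs_def)
  obtain L where "(\<lambda>k. sqrt (kgram K (s k))) \<longlonglongrightarrow> L"
    using approx_gram_conv[OF mk s] by (auto simp: convergent_def)
  then have ne: "SS \<noteq> {}" using s by (auto simp: SS_def)
  have kx: "sqrt (K x x) \<ge> 0" using Kxx_nonneg[OF mk x] by simp
  have bd: "\<forall>L\<in>SS. \<bar>f x\<bar> \<le> L * sqrt (K x x)"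
    using approx_bound_L[OF mk _ _ x] by (auto simp: SS_def)
  show ?thesis
  proof (cases "sqrt (K x x) = 0")
    case True
    then show ?thesis using bd ne by auto
  next
    case False
    then have kp: "sqrt (K x x) > 0" using kx by simp
    have "\<bar>f x\<bar> / sqrt (K x x) \<le> Inf SS"
      by (rule cInf_greatest[OF ne]) (use bd kp in \<open>auto simp: divide_le_eq\<close>)
    then show ?thesis using kp by (simp add: rkhs_norm_def SS_def[symmetric] divide_le_eq)
  qed
qed

lemma zero_in_rkhs: "in_rkhs X K (\<lambda>_. 0)"
  unfolding in_rkhs_def rkhs_approx_def
  by (rule exI[of _ "\<lambda>k. (0, \<lambda>_. undefined, \<lambda>_. 0)"]) (simp add: kdist2_def kfun_def)

lemma zero_rkhs_norm:
  assumes mk: "mercer_kernel X K" shows "rkhs_norm X K (\<lambda>_. 0) \<le> 0"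
proof -
  define SS where "SS = {L. \<exists>s. rkhs_approx X K (\<lambda>_. 0) s \<and> (\<lambda>k. sqrt (kgram K (s k))) \<longlonglongrightarrow> L}"
  have "0 \<in> SS" unfolding SS_def rkhs_approx_def
    by (rule CollectI, rule exI[of _ "\<lambda>k. (0, \<lambda>_. undefined, \<lambda>_. 0)"]) (simp add: kdist2_def kfun_def kgram_def)
  moreover have "bdd_below SS"
    by (rule bdd_belowI[of _ 0]) (use approx_L_nonneg[OF mk] in \<open>auto simp: SS_def\<close>)
  ultimately show ?thesis unfolding rkhs_norm_def SS_def[symmetric] by (rule cInf_lower)
qed

lemma K_cont2:
  assumes mk: "mercer_kernel X K" and c: "c \<in> X"
  shows "continuous_on X (\<lambda>x. K c x)"
proof -
  have "continuous_on (X \<times> X) (\<lambda>(x, y). K x y)" using mk by (simp add: mercer_kernel_def)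
  moreover have "continuous_on X (\<lambda>x. (c, x))" by (intro continuous_intros)
  moreover have "(\<lambda>x. (c, x)) ` X \<subseteq> X \<times> X" using c by auto
  ultimately show ?thesis using continuous_on_compose2[of "X \<times> X" "\<lambda>(x, y). K x y" X "\<lambda>x. (c, x)"]
    by auto
qed

lemma K_diag_cont:
  assumes mk: "mercer_kernel X K"
  shows "continuous_on X (\<lambda>x. K x x)"
proof -
  have "continuous_on (X \<times> X) (\<lambda>(x, y). K x y)" using mk by (simp add: mercer_kernel_def)
  moreover have "continuous_on X (\<lambda>x. (x, x))" by (intro continuous_intros)
  moreover have "(\<lambda>x. (x, x)) ` X \<subseteq> X \<times> X" by auto
  ultimately show ?thesis using continuous_on_compose2[of "X \<times> X" "\<lambda>(x, y). K x y" X "\<lambda>x. (x, x)"]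
    by auto
qed

lemma kfun_cont:
  assumes mk: "mercer_kernel X K" and c: "kcent X r"
  shows "continuous_on X (kfun K r)"
proof -
  obtain m cc a where r: "r = (m, cc, a)" by (metis prod.exhaust)
  have "continuous_on X (\<lambda>x. \<Sum>i<m. a i * K (cc i) x)"
    by (intro continuous_intros K_cont2[OF mk]) (use c in \<open>auto simp: kcent_def r\<close>)
  then show ?thesis by (simp add: kfun_def r)
qed

lemma kappa_bound:
  fixes X :: "(real^'p) set"
  assumes cX: "compact X" and mk: "mercer_kernel X K" and x: "x \<in> X"
  shows "sqrt (K x x) \<le> kappa X K"
proof -
  have "continuous_on X (\<lambda>x. sqrt (K x x))"
    by (intro continuous_intros K_diag_cont[OF mk])
  then have "compact ((\<lambda>x. sqrt (K x x)) ` X)" using cX by (rule compact_continuous_image)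
  then have "bdd_above ((\<lambda>x. sqrt (K x x)) ` X)" by (intro bounded_imp_bdd_above compact_imp_bounded)
  then show ?thesis unfolding kappa_def by (rule cSUP_upper[OF x])
qed

lemma rkhs_cont:
  fixes X :: "(real^'p) set"
  assumes cX: "compact X" and mk: "mercer_kernel X K" and f: "in_rkhs X K f"
  shows "continuous_on X f"
proof -
  obtain s where ap: "rkhs_approx X K f s" using f by (auto simp: in_rkhs_def)
  define k' where "k' = max (kappa X K) 0 + 1"
  have k'0: "k' > 0" by (simp add: k'_def)
  have kk: "sqrt (K x x) \<le> k'" if "x \<in> X" for x
    using kappa_bound[OF cX mk that] by (simp add: k'_def)
  have "uniform_limit X (\<lambda>k. kfun K (s k)) f sequentially"
  proof (rule uniform_limitI)
    fix e :: real assume e: "e > 0"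
    define d where "d = e / (2 * k')"
    have d0: "d > 0" using e k'0 by (simp add: d_def)
    obtain N where N: "\<forall>k\<ge>N. \<forall>l\<ge>N. kdist2 K (s k) (s l) < d\<^sup>2"
      using ap d0 unfolding rkhs_approx_def by (meson zero_less_power)
    show "\<forall>\<^sub>F k in sequentially. \<forall>x\<in>X. dist (kfun K (s k) x) (f x) < e"
    proof (rule eventually_sequentiallyI[of N], intro ballI)
      fix k x assume k: "N \<le> k" and x: "x \<in> X"
      have lim: "(\<lambda>l. \<bar>kfun K (s k) x - kfun K (s l) x\<bar>) \<longlonglongrightarrow> \<bar>kfun K (s k) x - f x\<bar>"
        using ap x unfolding rkhs_approx_def by (auto intro!: tendsto_intros)
      have "\<bar>kfun K (s k) x - kfun K (s l) x\<bar> \<le> e / 2" if l: "l \<ge> N" for l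
      proof -
        have "kdist2 K (s k) (s l) < d\<^sup>2" using N k l by auto
        then have "sqrt (kdist2 K (s k) (s l)) \<le> d"
          using d0 by (metis less_imp_le real_sqrt_abs abs_of_pos real_sqrt_le_mono)
        moreover have "sqrt (kdist2 K (s k) (s l)) \<ge> 0"
          using kdist2_nonneg[OF mk approx_kcent[OF ap] approx_kcent[OF ap]] by simp
        moreover have "0 \<le> sqrt (K x x)" using Kxx_nonneg[OF mk x] by simp
        ultimately have "sqrt (kdist2 K (s k) (s l)) * sqrt (K x x) \<le> d * k'"
          using kk[OF x] d0 by (intro mult_mono) auto
        also have "\<dots> = e / 2" using k'0 by (simp add: d_def)
        finally show ?thesis
          using kfun_diff[OF mk approx_kcent[OF ap] approx_kcent[OF ap] x, of k l] by linarith
      qed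
      then have "\<bar>kfun K (s k) x - f x\<bar> \<le> e / 2"
        by (intro LIMSEQ_le_const2[OF lim]) auto
      then show "dist (kfun K (s k) x) (f x) < e" using e by (simp add: dist_real_def)
    qed
  qed
  then show ?thesis
    by (rule uniform_limit_theorem[rotated]) (use kfun_cont[OF mk approx_kcent[OF ap]] in auto)
qed



lemma lsc_measurable:
  fixes h :: "'f \<Rightarrow> 'a::topological_space \<Rightarrow> real"
  assumes A: "A \<in> sets borel" and hc: "\<And>f. f \<in> F \<Longrightarrow> continuous_on A (h f)"
    and ne: "F \<noteq> {}" and bd: "\<And>W. W \<in> A \<Longrightarrow> bdd_above ((\<lambda>f. h f W) ` F)"
  shows "(\<lambda>W. SUP f\<in>F. h f W) \<in> borel_measurable (restrict_space borel A)"
proof (subst borel_measurable_iff_greater, intro allI)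
  fix a :: real
  have sp: "space (restrict_space borel A) = A" using A by simp
  have eq: "{W \<in> A. a < (SUP f\<in>F. h f W)} = (\<Union>f\<in>F. A \<inter> h f -` {a<..})"
    using less_cSUP_iff[OF ne bd] by auto
  have "openin (top_of_set A) (\<Union>f\<in>F. A \<inter> h f -` {a<..})"
    by (intro openin_Union) (auto intro!: continuous_openin_preimage_gen hc)
  then obtain T where T: "open T" "(\<Union>f\<in>F. A \<inter> h f -` {a<..}) = A \<inter> T"
    by (auto simp: openin_open)
  have "A \<inter> T \<in> sets (restrict_space borel A)"
    using A T(1) by (subst sets_restrict_space_iff) auto
  then show "{W \<in> space (restrict_space borel A). a < (SUP f\<in>F. h f W)} \<in> sets (restrict_space borel A)"
    unfolding sp eq T(2) .
qed



definition cl :: "(real \<Rightarrow> real) \<Rightarrow> (nat \<Rightarrow> 'x \<times> real) \<Rightarrow> nat \<Rightarrow> 'x \<times> real" where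
  "cl \<psi> W = (\<lambda>i. (fst (W i), \<psi> (snd (W i))))"

lemma weight_bounds: "0 \<le> weight s x" "weight s x \<le> 1"
proof -
  show "0 \<le> weight s x" by (simp add: weight_def)
  have "- (norm x)\<^sup>2 / (2 * s\<^sup>2) \<le> 0" by (simp add: divide_nonneg_nonneg)
  then show "weight s x \<le> 1" by (simp add: weight_def)
qed

context
  fixes X :: "(real^'p) set" and K :: "real^'p \<Rightarrow> real^'p \<Rightarrow> real"
    and \<rho> :: "((real^'p) \<times> real) measure" and M r :: real
  assumes cX: "compact X" and mk: "mercer_kernel X K" and PR: "prob_space \<rho>"
    and sr: "sets \<rho> = sets (restrict_space borel (X \<times> UNIV))"
    and AEM: "AE z in \<rho>. \<bar>snd z\<bar> \<le> M" and r0: "r > 0"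
begin

interpretation R: prob_space \<rho> by (rule PR)

lemma space_rho: "space \<rho> = X \<times> UNIV"
proof -
  have "space \<rho> = space (restrict_space borel (X \<times> UNIV))" by (rule sets_eq_imp_space_eq[OF sr])
  then show ?thesis by (simp add: space_restrict_space)
qed

lemma X_ne: "X \<noteq> {}" using R.not_empty space_rho by auto

lemma M_nonneg: "M \<ge> 0"
proof -
  have "AE z in \<rho>. 0 \<le> M" using AEM by (rule eventually_mono) auto
  then show ?thesis by simp
qed

lemma kappa_nonneg: "kappa X K \<ge> 0"
proof -
  obtain x where "x \<in> X" using X_ne by auto
  then show ?thesis using kappa_bound[OF cX mk] Kxx_nonneg[OF mk] by (meson order.trans real_sqrt_ge_zero)
qed

lemma diam_nonneg: "diameter X \<ge> 0" by (rule diameter_ge_0[OF compact_imp_bounded[OF cX]])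

lemma zero_F: "(\<lambda>j. \<lambda>_. 0) \<in> F_ball X K r"
  using zero_rkhs_norm[OF mk] r0 by (auto simp: F_ball_def zero_in_rkhs intro!: order.trans[OF mult_nonneg_nonpos])

lemma F_ne: "F_ball X K r \<noteq> {}" using zero_F by auto

lemma vapp_bound:
  assumes f: "f \<in> F_ball X K r" and x: "x \<in> X"
  shows "norm (vapp f x) \<le> kappa X K * r"
proof -
  have "norm (vapp f x) \<le> (\<Sum>j\<in>UNIV. \<bar>f j x\<bar>)" using norm_le_l1_cart[of "vapp f x"] by (simp add: vapp_def)
  also have "\<dots> \<le> (\<Sum>j\<in>UNIV. rkhs_norm X K (f j) * sqrt (K x x))"
    by (intro sum_mono rkhs_bound[OF mk _ x]) (use f in \<open>auto simp: F_ball_def\<close>)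
  also have "\<dots> = (\<Sum>j\<in>UNIV. rkhs_norm X K (f j)) * sqrt (K x x)" by (simp add: sum_distrib_right)
  also have "\<dots> \<le> r * sqrt (K x x)"
    using f Kxx_nonneg[OF mk x] by (intro mult_right_mono) (auto simp: F_ball_def)
  also have "\<dots> \<le> r * kappa X K" using kappa_bound[OF cX mk x] r0 by (intro mult_left_mono) auto
  finally show ?thesis by (simp add: mult.commute)
qed

lemma inner_bound:
  assumes f: "f \<in> F_ball X K r" and x: "x \<in> X" and u: "u \<in> X"
  shows "\<bar>vapp f x \<bullet> (u - x)\<bar> \<le> kappa X K * r * diameter X"
proof -
  have "\<bar>vapp f x \<bullet> (u - x)\<bar> \<le> norm (vapp f x) * norm (u - x)" by (rule Cauchy_Schwarz_ineq2)
  also have "\<dots> \<le> kappa X K * r * diameter X"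
  proof (rule mult_mono)
    show "norm (u - x) \<le> diameter X"
      using diameter_bounded_bound[OF compact_imp_bounded[OF cX] u x] by (simp add: dist_norm)
  qed (use vapp_bound[OF f x] kappa_nonneg r0 in auto)
  finally show ?thesis .
qed

definition Bd where "Bd = kappa X K * r * diameter X"

lemma Bd_nonneg: "Bd \<ge> 0" using kappa_nonneg r0 diam_nonneg by (simp add: Bd_def)

lemma term_bound:
  assumes f: "f \<in> F_ball X K r" and x: "x \<in> X" and u: "u \<in> X"
  shows "0 \<le> weight s w * (y - v + vapp f x \<bullet> (u - x))\<^sup>2"
    and "weight s w * (y - v + vapp f x \<bullet> (u - x))\<^sup>2 \<le> (\<bar>y\<bar> + \<bar>v\<bar> + Bd)\<^sup>2"
proof -
  show "0 \<le> weight s w * (y - v + vapp f x \<bullet> (u - x))\<^sup>2" using weight_bounds[of s w] by simp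
  have "\<bar>y - v + vapp f x \<bullet> (u - x)\<bar> \<le> \<bar>y\<bar> + \<bar>v\<bar> + Bd"
    using inner_bound[OF f x u] unfolding Bd_def by linarith
  then have "(y - v + vapp f x \<bullet> (u - x))\<^sup>2 \<le> (\<bar>y\<bar> + \<bar>v\<bar> + Bd)\<^sup>2"
    by (metis abs_ge_zero abs_le_square_iff abs_of_nonneg order.trans)
  moreover have "weight s w * (y - v + vapp f x \<bullet> (u - x))\<^sup>2 \<le> (y - v + vapp f x \<bullet> (u - x))\<^sup>2"
    using weight_bounds[of s w] by (simp add: mult_left_le_one_le)
  ultimately show "weight s w * (y - v + vapp f x \<bullet> (u - x))\<^sup>2 \<le> (\<bar>y\<bar> + \<bar>v\<bar> + Bd)\<^sup>2" by linarith
qed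

lemma integral_abs_le_AE:
  fixes g :: "'b \<Rightarrow> real"
  assumes P: "prob_space N" and AE: "AE x in N. \<bar>g x\<bar> \<le> C"
  shows "\<bar>integral\<^sup>L N g\<bar> \<le> C"
proof -
  interpret N: prob_space N by (rule P)
  have C0: "C \<ge> 0"
  proof -
    have "AE x in N. 0 \<le> C" using AE by (rule eventually_mono) auto
    then show ?thesis by simp
  qed
  show ?thesis
  proof (cases "integrable N g")
    case True
    have "\<bar>integral\<^sup>L N g\<bar> \<le> (\<integral>x. \<bar>g x\<bar> \<partial>N)" by (rule integral_abs_bound)
    also have "\<dots> \<le> (\<integral>x. C \<partial>N)" by (rule integral_mono_AE) (use True AE in auto)
    finally show ?thesis by (simp add: N.prob_space)
  next
    case False
    then show ?thesis by (simp add: not_integrable_integral_eq C0)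
  qed
qed

lemma exp_bound:
  assumes f: "f \<in> F_ball X K r"
  shows "\<bar>exp_err s \<rho> f\<bar> \<le> (2 * M + Bd)\<^sup>2"
  unfolding exp_err_def
proof (rule integral_abs_le_AE[OF PR])
  have sp: "AE z in \<rho>. z \<in> space \<rho>" by simp
  from AEM sp show "AE z in \<rho>. \<bar>\<integral>w. weight s (fst z - fst w) *
      (snd z - snd w + vapp f (fst z) \<bullet> (fst w - fst z))\<^sup>2 \<partial>\<rho>\<bar> \<le> (2 * M + Bd)\<^sup>2"
  proof (eventually_elim)
    case (elim z)
    then have zX: "fst z \<in> X" by (auto simp: space_rho)
    show ?case
    proof (rule integral_abs_le_AE[OF PR])
      from AEM sp show "AE w in \<rho>. \<bar>weight s (fst z - fst w) *
         (snd z - snd w + vapp f (fst z) \<bullet> (fst w - fst z))\<^sup>2\<bar> \<le> (2 * M + Bd)\<^sup>2"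
      proof (eventually_elim)
        case (elim w)
        then have wX: "fst w \<in> X" by (auto simp: space_rho)
        have "\<bar>weight s (fst z - fst w) * (snd z - snd w + vapp f (fst z) \<bullet> (fst w - fst z))\<^sup>2\<bar>
           \<le> (\<bar>snd z\<bar> + \<bar>snd w\<bar> + Bd)\<^sup>2"
          using term_bound[OF f zX wX, of s "fst z - fst w" "snd z" "snd w"] by simp
        also have "\<dots> \<le> (2 * M + Bd)\<^sup>2"
          using \<open>\<bar>snd z\<bar> \<le> M\<close> elim(1) Bd_nonneg by (intro power_mono) auto
        finally show ?case .
      qed
    qed
  qed
qed


definition EB :: "nat \<Rightarrow> (nat \<Rightarrow> (real^'p) \<times> real) \<Rightarrow> real" where
  "EB n Z = (1 / (real n)\<^sup>2) * (\<Sum>i<n. \<Sum>j<n. (\<bar>snd (Z i)\<bar> + \<bar>snd (Z j)\<bar> + Bd)\<^sup>2)"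

lemma emp_bound:
  assumes f: "f \<in> F_ball X K r" and Z: "\<forall>i<n. fst (Z i) \<in> X"
  shows "0 \<le> emp_err s n Z f" "emp_err s n Z f \<le> EB n Z"
proof -
  show "0 \<le> emp_err s n Z f" unfolding emp_err_def
    by (intro mult_nonneg_nonneg sum_nonneg weight_bounds(1) zero_le_power2) simp_all
  show "emp_err s n Z f \<le> EB n Z" unfolding emp_err_def EB_def
    by (intro mult_left_mono sum_mono term_bound(2)[OF f]) (use Z in simp_all)
qed

lemma bdd_h:
  assumes Z: "\<forall>i<n. fst (Z i) \<in> X"
  shows "bdd_above ((\<lambda>f. \<bar>emp_err s n Z f - exp_err s \<rho> f\<bar>) ` F_ball X K r)"
proof (rule bdd_aboveI2)
  fix f assume f: "f \<in> F_ball X K r"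
  show "\<bar>emp_err s n Z f - exp_err s \<rho> f\<bar> \<le> EB n Z + (2 * M + Bd)\<^sup>2"
    using emp_bound[OF f Z, where s=s] exp_bound[OF f, of s] by linarith
qed

lemma weight_cont[continuous_intros]: "continuous_on S g \<Longrightarrow> continuous_on S (\<lambda>x. weight s (g x))"
  unfolding weight_def divide_inverse by (intro continuous_intros)

lemma h_cont:
  assumes f: "f \<in> F_ball X K r" and \<psi>: "continuous_on UNIV \<psi>"
  shows "continuous_on {W. \<forall>i<n. fst (W i) \<in> X}
     (\<lambda>W. \<bar>emp_err s n (cl \<psi> W) f - exp_err s \<rho> f\<bar>)"
proof -
  let ?A = "{W::nat \<Rightarrow> (real^'p) \<times> real. \<forall>i<n. fst (W i) \<in> X}"
  have coord: "continuous_on ?A (\<lambda>W. W i)" for i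
    by (rule continuous_on_subset[OF continuous_on_product_coordinates]) auto
  have fc: "continuous_on X (f j)" for j
    by (rule rkhs_cont[OF cX mk]) (use f in \<open>auto simp: F_ball_def\<close>)
  have vc: "continuous_on ?A (\<lambda>W. vapp f (fst (W i)))" if i: "i < n" for i
    unfolding vapp_def
  proof (intro continuous_on_vec_lambda)
    fix j
    show "continuous_on ?A (\<lambda>W. f j (fst (W i)))"
      by (rule continuous_on_compose2[OF fc]) (use i in \<open>auto intro!: continuous_intros coord\<close>)
  qed
  have pc: "continuous_on ?A (\<lambda>W. \<psi> (snd (W i)))" for i
    by (rule continuous_on_compose2[OF \<psi>]) (auto intro!: continuous_intros coord)
  show ?thesis
    unfolding emp_err_def cl_def
    by (intro continuous_intros coord pc) (auto intro!: vc)
qed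

lemma A_closed: "closed {W::nat \<Rightarrow> (real^'p) \<times> real. \<forall>i<n. fst (W i) \<in> X}"
proof -
  have "{W::nat \<Rightarrow> (real^'p) \<times> real. \<forall>i<n. fst (W i) \<in> X} = (\<Inter>i\<in>{..<n}. (\<lambda>W. fst (W i)) -` X)"
    by auto
  moreover have "closed ((\<lambda>W::nat \<Rightarrow> (real^'p) \<times> real. fst (W i)) -` X)" for i
    by (rule closed_vimage[OF compact_imp_closed[OF cX]])
       (auto intro!: continuous_intros continuous_on_product_coordinates)
  ultimately show ?thesis by auto
qed

lemma id_meas: fixes n :: nat shows "(\<lambda>Z. Z) \<in> measurable (PiM {..<n} (\<lambda>_. \<rho>)) (restrict_space borel {W. \<forall>i<n. fst (W i) \<in> X})"
proof (rule measurable_restrict_space2)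
  show "(\<lambda>Z. Z) \<in> space (PiM {..<n} (\<lambda>_. \<rho>)) \<rightarrow> {W. \<forall>i<n. fst (W i) \<in> X}"
    by (auto simp: space_PiM space_rho PiE_def Pi_def)
  have rb: "(\<lambda>x. x) \<in> measurable \<rho> borel"
    by (subst measurable_cong_sets[OF sr refl]) (rule measurable_restrict_space1, simp)
  show "(\<lambda>Z. Z) \<in> borel_measurable (PiM {..<n} (\<lambda>_. \<rho>))"
  proof (rule measurable_coordinatewise_then_product)
    fix i
    show "(\<lambda>Z. Z i) \<in> borel_measurable (PiM {..<n} (\<lambda>_. \<rho>))"
    proof (cases "i < n")
      case True
      then show ?thesis using measurable_comp[OF measurable_component_singleton[of i "{..<n}" "\<lambda>_. \<rho>"] rb]
        by (simp add: comp_def)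
    next
      case False
      have "(\<lambda>_. undefined) \<in> borel_measurable (PiM {..<n} (\<lambda>_. \<rho>))" by simp
      then show ?thesis
        by (rule measurable_cong[THEN iffD1, rotated]) (use False in \<open>auto simp: space_PiM PiE_def extensional_def\<close>)
    qed
  qed
qed

lemma S_meas:
  assumes \<psi>: "continuous_on UNIV \<psi>"
  shows "(\<lambda>Z. S_dev X K s \<rho> n r (cl \<psi> Z)) \<in> borel_measurable (PiM {..<n} (\<lambda>_. \<rho>))"
proof -
  let ?A = "{W::nat \<Rightarrow> (real^'p) \<times> real. \<forall>i<n. fst (W i) \<in> X}"
  have "(\<lambda>W. SUP f\<in>F_ball X K r. \<bar>emp_err s n (cl \<psi> W) f - exp_err s \<rho> f\<bar>) \<in> borel_measurable (restrict_space borel ?A)"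
  proof (rule lsc_measurable)
    show "?A \<in> sets borel" using A_closed by (rule borel_closed)
    show "F_ball X K r \<noteq> {}" by (rule F_ne)
    fix W assume "W \<in> ?A"
    then show "bdd_above ((\<lambda>f. \<bar>emp_err s n (cl \<psi> W) f - exp_err s \<rho> f\<bar>) ` F_ball X K r)"
      by (intro bdd_h) (auto simp: cl_def)
  qed (rule h_cont[OF _ \<psi>])
  from measurable_comp[OF id_meas this] show ?thesis by (simp add: comp_def S_dev_def)
qed


definition psc :: "real \<Rightarrow> real" where "psc y = max (- M) (min M y)"

lemma psc_cont: "continuous_on UNIV psc" unfolding psc_def by (intro continuous_intros)

lemma psc_bound: "\<bar>psc y\<bar> \<le> M" using M_nonneg by (auto simp: psc_def)

definition Q where "Q = (2 * M + Bd)\<^sup>2"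

lemma term_Q:
  assumes f: "f \<in> F_ball X K r" and x: "x \<in> X" and u: "u \<in> X" and y: "\<bar>y\<bar> \<le> M" and v: "\<bar>v\<bar> \<le> M"
  shows "0 \<le> weight s w * (y - v + vapp f x \<bullet> (u - x))\<^sup>2" "weight s w * (y - v + vapp f x \<bullet> (u - x))\<^sup>2 \<le> Q"
proof -
  show "0 \<le> weight s w * (y - v + vapp f x \<bullet> (u - x))\<^sup>2" by (rule term_bound(1)[OF f x u])
  have "(\<bar>y\<bar> + \<bar>v\<bar> + Bd)\<^sup>2 \<le> Q" unfolding Q_def using y v Bd_nonneg by (intro power_mono) auto
  with term_bound(2)[OF f x u] show "weight s w * (y - v + vapp f x \<bullet> (u - x))\<^sup>2 \<le> Q" by (rule order.trans)
qed

lemma emp_diff: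
  fixes n k :: nat
  assumes f: "f \<in> F_ball X K r" and n0: "n > 0" and k: "k < n"
    and Z: "\<forall>i<n. fst (Z i) \<in> X \<and> \<bar>snd (Z i)\<bar> \<le> M" and p: "fst p \<in> X" "\<bar>snd p\<bar> \<le> M"
  shows "\<bar>emp_err s n (Z(k:=p)) f - emp_err s n Z f\<bar> \<le> 2 * Q / real n"
proof -
  define t where "t (Z'::nat \<Rightarrow> (real^'p) \<times> real) i j = weight s (fst (Z' j) - fst (Z' i)) *
      (snd (Z' i) - snd (Z' j) + vapp f (fst (Z' i)) \<bullet> (fst (Z' j) - fst (Z' i)))\<^sup>2" for Z' i j
  let ?Z2 = "Z(k:=p)"
  have Z2: "\<forall>i<n. fst (?Z2 i) \<in> X \<and> \<bar>snd (?Z2 i)\<bar> \<le> M" using Z p by auto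
  have tb: "0 \<le> t Z' i j \<and> t Z' i j \<le> Q" if "\<forall>i<n. fst (Z' i) \<in> X \<and> \<bar>snd (Z' i)\<bar> \<le> M" "i < n" "j < n" for Z' i j
    unfolding t_def using that by (intro conjI term_Q[OF f]) auto
  have td: "\<bar>t ?Z2 i j - t Z i j\<bar> \<le> (if i = k then Q else 0) + (if j = k then Q else 0)" if "i < n" "j < n" for i j
  proof (cases "i = k \<or> j = k")
    case True
    have Q0: "Q \<ge> 0" by (simp add: Q_def)
    have "\<bar>t ?Z2 i j - t Z i j\<bar> \<le> Q"
      unfolding abs_le_iff using tb[OF Z2 that] tb[OF Z that] by linarith
    then show ?thesis using True Q0 by (cases "i = k"; cases "j = k") simp_all
  next
    case False
    then show ?thesis by (simp add: t_def)
  qed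
  have "emp_err s n ?Z2 f - emp_err s n Z f = (1 / (real n)\<^sup>2) * (\<Sum>i<n. \<Sum>j<n. t ?Z2 i j - t Z i j)"
    unfolding emp_err_def t_def by (simp add: sum_subtractf right_diff_distrib)
  also have "\<bar>\<dots>\<bar> \<le> (1 / (real n)\<^sup>2) * (\<Sum>i<n. \<Sum>j<n. (if i = k then Q else 0) + (if j = k then Q else 0))"
  proof -
    have "\<bar>\<Sum>i<n. \<Sum>j<n. t ?Z2 i j - t Z i j\<bar> \<le> (\<Sum>i<n. \<Sum>j<n. \<bar>t ?Z2 i j - t Z i j\<bar>)"
      by (rule order.trans[OF sum_abs]) (intro sum_mono sum_abs)
    also have "\<dots> \<le> (\<Sum>i<n. \<Sum>j<n. (if i = k then Q else 0) + (if j = k then Q else 0))"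
      by (intro sum_mono td) auto
    finally have h: "\<bar>\<Sum>i<n. \<Sum>j<n. t ?Z2 i j - t Z i j\<bar> \<le> (\<Sum>i<n. \<Sum>j<n. (if i = k then Q else 0) + (if j = k then Q else 0))" .
    have "\<bar>(1 / (real n)\<^sup>2) * (\<Sum>i<n. \<Sum>j<n. t ?Z2 i j - t Z i j)\<bar> = (1 / (real n)\<^sup>2) * \<bar>\<Sum>i<n. \<Sum>j<n. t ?Z2 i j - t Z i j\<bar>"
      by (simp add: abs_mult)
    also have "\<dots> \<le> (1 / (real n)\<^sup>2) * (\<Sum>i<n. \<Sum>j<n. (if i = k then Q else 0) + (if j = k then Q else 0))"
      by (rule mult_left_mono[OF h]) simp
    finally show ?thesis .
  qed
  also have "(\<Sum>i<n. \<Sum>j<n. (if i = k then Q else 0) + (if j = k then Q else 0)) = 2 * real n * Q"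
    using k by (simp add: sum.distrib sum_distrib_left[symmetric])
  also have "(1 / (real n)\<^sup>2) * (2 * real n * Q) = 2 * Q / real n"
    using n0 by (simp add: power2_eq_square field_simps)
  finally show ?thesis .
qed

lemma sup_diff:
  fixes a b :: "'f \<Rightarrow> real"
  assumes ne: "F \<noteq> {}" and ba: "bdd_above (a ` F)" and bb: "bdd_above (b ` F)"
    and d: "\<And>f. f \<in> F \<Longrightarrow> \<bar>a f - b f\<bar> \<le> c"
  shows "\<bar>(SUP f\<in>F. a f) - (SUP f\<in>F. b f)\<bar> \<le> c"
proof -
  have "(SUP f\<in>F. a f) \<le> (SUP f\<in>F. b f) + c"
  proof (rule cSUP_least[OF ne])
    fix f assume "f \<in> F"
    then show "a f \<le> (SUP f\<in>F. b f) + c" using d[of f] cSUP_upper[OF _ bb, of f] by linarith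
  qed
  moreover have "(SUP f\<in>F. b f) \<le> (SUP f\<in>F. a f) + c"
  proof (rule cSUP_least[OF ne])
    fix f assume "f \<in> F"
    then show "b f \<le> (SUP f\<in>F. a f) + c" using d[of f] cSUP_upper[OF _ ba, of f] by linarith
  qed
  ultimately show ?thesis by linarith
qed

lemma cl_space:
  fixes n :: nat
  assumes Z: "Z \<in> space (PiM {..<n} (\<lambda>_. \<rho>))"
  shows "\<forall>i<n. fst (cl psc Z i) \<in> X \<and> \<bar>snd (cl psc Z i)\<bar> \<le> M"
  using Z psc_bound by (auto simp: cl_def space_PiM space_rho PiE_def Pi_def)

lemma S_diff:
  fixes n :: nat
  assumes n0: "n > 0" and Z: "Z \<in> space (PiM {..<n} (\<lambda>_. \<rho>))" and k: "k < n" and w: "w \<in> space \<rho>"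
  shows "\<bar>S_dev X K s \<rho> n r (cl psc (Z(k:=w))) - S_dev X K s \<rho> n r (cl psc Z)\<bar> \<le> 2 * Q / real n"
proof -
  have eq: "cl psc (Z(k:=w)) = (cl psc Z)(k := (fst w, psc (snd w)))" by (auto simp: cl_def)
  have Z1: "\<forall>i<n. fst (cl psc Z i) \<in> X \<and> \<bar>snd (cl psc Z i)\<bar> \<le> M" by (rule cl_space[OF Z])
  have p: "fst (fst w, psc (snd w)) \<in> X" "\<bar>snd (fst w, psc (snd w))\<bar> \<le> M"
    using w psc_bound by (auto simp: space_rho)
  have Z2: "\<forall>i<n. fst (((cl psc Z)(k := (fst w, psc (snd w)))) i) \<in> X" using Z1 p by auto
  show ?thesis unfolding S_dev_def eq
  proof (rule sup_diff[OF F_ne bdd_h[OF Z2] bdd_h])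
    show "\<forall>i<n. fst (cl psc Z i) \<in> X" using Z1 by auto
    fix f assume f: "f \<in> F_ball X K r"
    show "\<bar>\<bar>emp_err s n ((cl psc Z)(k := (fst w, psc (snd w)))) f - exp_err s \<rho> f\<bar> -
          \<bar>emp_err s n (cl psc Z) f - exp_err s \<rho> f\<bar>\<bar> \<le> 2 * Q / real n"
      using emp_diff[OF f n0 k Z1 p, of s] by linarith
  qed
qed

lemma S_bounded:
  fixes n :: nat
  assumes Z: "Z \<in> space (PiM {..<n} (\<lambda>_. \<rho>))"
  shows "\<bar>S_dev X K s \<rho> n r (cl psc Z)\<bar> \<le> 2 * Q"
proof -
  have Z1: "\<forall>i<n. fst (cl psc Z i) \<in> X \<and> \<bar>snd (cl psc Z i)\<bar> \<le> M" by (rule cl_space[OF Z])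
  then have Z1': "\<forall>i<n. fst (cl psc Z i) \<in> X" by auto
  have hb: "\<bar>emp_err s n (cl psc Z) f - exp_err s \<rho> f\<bar> \<le> 2 * Q" if f: "f \<in> F_ball X K r" for f
  proof -
    have "emp_err s n (cl psc Z) f \<le> (1 / (real n)\<^sup>2) * (\<Sum>i<n. \<Sum>j<n. Q)"
      unfolding emp_err_def by (intro mult_left_mono sum_mono term_Q(2)[OF f]) (use Z1 in auto)
    also have "\<dots> \<le> Q"
      by (cases "n = 0") (auto simp: Q_def power2_eq_square)
    finally have "emp_err s n (cl psc Z) f \<le> Q" .
    then show ?thesis using emp_bound(1)[OF f Z1', where s=s] exp_bound[OF f, of s] unfolding Q_def by linarith
  qed
  have up: "S_dev X K s \<rho> n r (cl psc Z) \<le> 2 * Q" unfolding S_dev_def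
    by (rule cSUP_least[OF F_ne hb])
  have "0 \<le> S_dev X K s \<rho> n r (cl psc Z)" unfolding S_dev_def
    by (rule order.trans[OF abs_ge_zero cSUP_upper[OF zero_F bdd_h[OF Z1']]])
  with up show ?thesis by simp
qed

lemma S_cl_eq:
  fixes n :: nat
  assumes "\<forall>i<n. \<bar>snd (Z i)\<bar> \<le> M"
  shows "S_dev X K s \<rho> n r (cl psc Z) = S_dev X K s \<rho> n r Z"
proof -
  have "\<forall>i<n. cl psc Z i = Z i" using assms by (auto simp: cl_def psc_def)
  then have "emp_err s n (cl psc Z) f = emp_err s n Z f" for f
    unfolding emp_err_def by (intro arg_cong2[where f="(*)"] refl sum.cong) auto
  then show ?thesis by (simp add: S_dev_def)
qed

lemma cl_id: "cl (\<lambda>y. y) Z = Z" by (simp add: cl_def)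


lemma main:
  fixes n :: nat and \<epsilon> s :: real
  assumes e0: "\<epsilon> > 0"
  shows "measure (PiM {..<n} (\<lambda>_. \<rho>))
           {Z \<in> space (PiM {..<n} (\<lambda>_. \<rho>)).
              \<bar>S_dev X K s \<rho> n r Z - (\<integral>Z'. S_dev X K s \<rho> n r Z' \<partial>(PiM {..<n} (\<lambda>_. \<rho>)))\<bar> \<ge> \<epsilon>}
         \<le> 2 * exp (- (real n * \<epsilon>\<^sup>2) / (32 * (M + kappa X K * diameter X * r) ^ 4))"
proof -
  let ?P = "PiM {..<n} (\<lambda>_. \<rho>)"
  interpret P: prob_space ?P by (rule prob_space_PiM) (rule PR)
  define B where "B = M + kappa X K * diameter X * r"
  have BB: "B = M + Bd" by (simp add: B_def Bd_def mult_ac)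
  have B0: "B \<ge> 0" using BB Bd_nonneg M_nonneg by simp
  define S where "S Z = S_dev X K s \<rho> n r Z" for Z
  define G where "G Z = S_dev X K s \<rho> n r (cl psc Z)" for Z
  show ?thesis
  proof (cases "n = 0 \<or> B = 0")
    case True
    then have "2 * exp (- (real n * \<epsilon>\<^sup>2) / (32 * (M + kappa X K * diameter X * r) ^ 4)) = 2"
      by (auto simp: B_def)
    moreover have "measure ?P {Z \<in> space ?P. \<bar>S_dev X K s \<rho> n r Z - (\<integral>Z'. S_dev X K s \<rho> n r Z' \<partial>?P)\<bar> \<ge> \<epsilon>} \<le> 1"
      by (rule P.prob_le_1)
    ultimately show ?thesis by linarith
  next
    case False
    then have n0: "n > 0" and Bp: "B > 0" using B0 by auto
    define c where "c = 8 * B\<^sup>2 / real n"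
    have c0: "c > 0" using n0 Bp by (simp add: c_def)
    have Gm: "G \<in> borel_measurable ?P" unfolding G_def by (rule S_meas[OF psc_cont])
    have Sm: "S \<in> borel_measurable ?P"
    proof -
      have "(\<lambda>Z. S_dev X K s \<rho> n r (cl (\<lambda>y. y) Z)) \<in> borel_measurable ?P"
        by (rule S_meas[OF continuous_on_id])
      moreover have "(\<lambda>Z. S_dev X K s \<rho> n r (cl (\<lambda>y. y) Z)) = S"
        by (rule ext) (simp only: cl_id S_def)
      ultimately show ?thesis by simp
    qed
    have GB: "\<forall>Z\<in>space ?P. \<bar>G Z\<bar> \<le> 2 * Q" unfolding G_def using S_bounded by blast
    have Qc: "2 * Q / real n \<le> c"
    proof -
      have "Q \<le> (2 * B)\<^sup>2" unfolding Q_def BB using M_nonneg Bd_nonneg by (intro power_mono) auto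
      then show ?thesis using n0 by (simp add: c_def divide_right_mono power_mult_distrib)
    qed
    have Gc: "\<forall>Z\<in>space ?P. \<forall>k<n. \<forall>w\<in>space \<rho>. \<bar>G (Z(k:=w)) - G Z\<bar> \<le> c"
      unfolding G_def
    proof (intro ballI allI impI)
      fix Z k w assume "Z \<in> space ?P" "k < n" "w \<in> space \<rho>"
      show "\<bar>S_dev X K s \<rho> n r (cl psc (Z(k:=w))) - S_dev X K s \<rho> n r (cl psc Z)\<bar> \<le> c"
        by (rule order.trans[OF S_diff[OF n0 \<open>Z \<in> space ?P\<close> \<open>k < n\<close> \<open>w \<in> space \<rho>\<close>] Qc])
    qed
    have mc: "measure ?P {Z\<in>space ?P. \<epsilon> \<le> \<bar>G Z - (\<integral>Z'. G Z' \<partial>?P)\<bar>} \<le> 2 * exp (- 2 * \<epsilon>\<^sup>2 / (real n * c\<^sup>2))"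
      by (rule mcdiarmid[OF PR c0 n0 Gm GB Gc e0])
    have ex: "- 2 * \<epsilon>\<^sup>2 / (real n * c\<^sup>2) = - (real n * \<epsilon>\<^sup>2) / (32 * B ^ 4)"
    proof -
      have c2: "c\<^sup>2 = 64 * B ^ 4 / (real n)\<^sup>2"
        unfolding c_def by (simp add: power_divide power_mult_distrib flip: power_mult)
      have nc: "real n * c\<^sup>2 = 64 * B ^ 4 / real n"
        using n0 unfolding c2 by (simp add: power2_eq_square)
      have "- 2 * \<epsilon>\<^sup>2 / (64 * B ^ 4 / real n) = - (real n * \<epsilon>\<^sup>2) / (32 * B ^ 4)"
        by (simp add: divide_divide_eq_right)
      then show ?thesis unfolding nc .
    qed
    have AE: "AE Z in ?P. \<forall>i\<in>{..<n}. \<bar>snd (Z i)\<bar> \<le> M"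
    proof (rule AE_finite_allI)
      fix i assume i: "i \<in> {..<n}"
      show "AE Z in ?P. \<bar>snd (Z i)\<bar> \<le> M"
        by (rule AE_PiM_component[where P="\<lambda>z. \<bar>snd z\<bar> \<le> M", OF PR i AEM])
    qed simp
    have AEG: "AE Z in ?P. G Z = S Z"
      using AE by (rule eventually_mono) (auto simp: G_def S_def S_cl_eq)
    have I: "(\<integral>Z'. S Z' \<partial>?P) = (\<integral>Z'. G Z' \<partial>?P)"
    proof (rule integral_cong_AE[OF Sm Gm])
      show "AE Z in ?P. S Z = G Z" using AEG by (rule eventually_mono) simp
    qed
    have "measure ?P {Z \<in> space ?P. \<bar>S Z - (\<integral>Z'. S Z' \<partial>?P)\<bar> \<ge> \<epsilon>}
        = measure ?P {Z\<in>space ?P. \<epsilon> \<le> \<bar>G Z - (\<integral>Z'. G Z' \<partial>?P)\<bar>}"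
      unfolding I
    proof (rule measure_eq_AE)
      show "AE Z in ?P. (Z \<in> {Z \<in> space ?P. \<bar>S Z - (\<integral>Z'. G Z' \<partial>?P)\<bar> \<ge> \<epsilon>}) =
                         (Z \<in> {Z\<in>space ?P. \<epsilon> \<le> \<bar>G Z - (\<integral>Z'. G Z' \<partial>?P)\<bar>})"
        using AEG by (rule eventually_mono) simp
      show "{Z \<in> space ?P. \<bar>S Z - (\<integral>Z'. G Z' \<partial>?P)\<bar> \<ge> \<epsilon>} \<in> sets ?P"
        using Sm by measurable
      show "{Z\<in>space ?P. \<epsilon> \<le> \<bar>G Z - (\<integral>Z'. G Z' \<partial>?P)\<bar>} \<in> sets ?P"
        using Gm by measurable
    qed
    also have "\<dots> \<le> 2 * exp (- (real n * \<epsilon>\<^sup>2) / (32 * B ^ 4))" using mc ex by simp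
    finally show ?thesis unfolding S_def B_def .
  qed
qed

end

theorem lemma3:
  fixes X :: "(real^'p) set" and K :: "real^'p \<Rightarrow> real^'p \<Rightarrow> real"
    and \<rho> :: "((real^'p) \<times> real) measure"
    and s M r \<epsilon> :: real and n :: nat
  assumes "compact X"
    and "mercer_kernel X K"
    and "prob_space \<rho>"
    and "sets \<rho> = sets (restrict_space borel (X \<times> UNIV))"
    and "s > 0"
    and "AE z in \<rho>. \<bar>snd z\<bar> \<le> M"
    and "r > 0" and "\<epsilon> > 0"
  shows "measure (PiM {..<n} (\<lambda>_. \<rho>))
           {Z \<in> space (PiM {..<n} (\<lambda>_. \<rho>)).
              \<bar>S_dev X K s \<rho> n r Z - (\<integral>Z'. S_dev X K s \<rho> n r Z' \<partial>(PiM {..<n} (\<lambda>_. \<rho>)))\<bar> \<ge> \<epsilon>}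
         \<le> 2 * exp (- (real n * \<epsilon>\<^sup>2) / (32 * (M + kappa X K * diameter X * r) ^ 4))"
  by (rule main[OF assms(1,2,3,4,6,7,8)])

end
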